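(* Let $n\ge 2$ and let $B$ be an $n\times n$ agreement matrix. If $H(X_B^+)=0$ and $B$ has exactly $m$ non-null rows, then $IA_\epsilon(B)$ exists and equals $(n-m)/n$.
   Context: An $n\times n$ agreement matrix $B$ has nonnegative entries $B[y][x]$ (row $y$, column $x$), not all zero. A row (column) is non-null if not all of its entries are $0$. For any $n\times n$ matrix $M$ with nonnegative real entries not all zero, let $S_M=\sum_{y,x}M[y][x]$ and define random variables $X_M$ on $\{1,\dots,n\}$ with $P(X_M=x)=\sum_yM[y][x]/S_M$, $Y_M$ with $P(Y_M=y)=\sum_xM[y][x]/S_M$, and the joint variable $X_MY_M$ with $P(X_MY_M=(y,x))=M[y][x]/S_M$. $H$ is Shannon entropy in base 2, defined only when all probabilities are positive. The information agreement is $IA(M)=\frac{H(X_M)+H(Y_M)-H(X_MY_M)}{\min\{H(X_M),H(Y_M)\}}$. For $\epsilon>0$, the $0$-freed matrix $B_\epsilon$ is obtained from $B$ by replacing every zero entry by $\epsilon$, and $IA_\epsilon(B)=\lim_{\epsilon\to0^+}IA(B_\epsilon)$. For a random variable $Z$, the refined variable $Z^+$ is $Z$ restricted to values of positive probability, with $H(Z^+)=-\sum_{z:\,p_Z(z)>0}p_Z(z)\log_2p_Z(z)$. *)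

theory Defs
  imports Complex_Main
begin

(* n x n matrices are functions M :: nat => nat => real, M y x = entry in row y, column x,
   with indices ranging over {..<n} (0-based instead of 1-based). *)

definition agreement_matrix :: "nat \<Rightarrow> (nat \<Rightarrow> nat \<Rightarrow> real) \<Rightarrow> bool" where
  "agreement_matrix n B \<longleftrightarrow> (\<forall>y<n. \<forall>x<n. 0 \<le> B y x) \<and> (\<exists>y<n. \<exists>x<n. B y x \<noteq> 0)"

definition non_null_rows :: "nat \<Rightarrow> (nat \<Rightarrow> nat \<Rightarrow> real) \<Rightarrow> nat set" where
  "non_null_rows n B = {y. y < n \<and> (\<exists>x<n. B y x \<noteq> 0)}"

definition Ssum :: "nat \<Rightarrow> (nat \<Rightarrow> nat \<Rightarrow> real) \<Rightarrow> real" where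
  "Ssum n M = (\<Sum>y<n. \<Sum>x<n. M y x)"

definition pX :: "nat \<Rightarrow> (nat \<Rightarrow> nat \<Rightarrow> real) \<Rightarrow> nat \<Rightarrow> real" where
  "pX n M x = (\<Sum>y<n. M y x) / Ssum n M"

definition pY :: "nat \<Rightarrow> (nat \<Rightarrow> nat \<Rightarrow> real) \<Rightarrow> nat \<Rightarrow> real" where
  "pY n M y = (\<Sum>x<n. M y x) / Ssum n M"

definition pXY :: "nat \<Rightarrow> (nat \<Rightarrow> nat \<Rightarrow> real) \<Rightarrow> nat \<times> nat \<Rightarrow> real" where
  "pXY n M yx = M (fst yx) (snd yx) / Ssum n M"

(* Shannon entropy (base 2) of a distribution p on a finite value set A
   (used only when all probabilities are positive) *)
definition shannonH :: "'a set \<Rightarrow> ('a \<Rightarrow> real) \<Rightarrow> real" where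
  "shannonH A p = - (\<Sum>z\<in>A. p z * log 2 (p z))"

(* entropy of the refined variable Z^+: sum over values of positive probability *)
definition shannonH_plus :: "'a set \<Rightarrow> ('a \<Rightarrow> real) \<Rightarrow> real" where
  "shannonH_plus A p = - (\<Sum>z\<in>{z\<in>A. 0 < p z}. p z * log 2 (p z))"

definition IA :: "nat \<Rightarrow> (nat \<Rightarrow> nat \<Rightarrow> real) \<Rightarrow> real" where
  "IA n M = (shannonH {..<n} (pX n M) + shannonH {..<n} (pY n M)
              - shannonH ({..<n} \<times> {..<n}) (pXY n M))
            / min (shannonH {..<n} (pX n M)) (shannonH {..<n} (pY n M))"

definition zero_freed :: "(nat \<Rightarrow> nat \<Rightarrow> real) \<Rightarrow> real \<Rightarrow> nat \<Rightarrow> nat \<Rightarrow> real" where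
  "zero_freed B \<epsilon> = (\<lambda>y x. if B y x = 0 then \<epsilon> else B y x)"

end

theory Submission
  imports Defs "HOL-Real_Asymp.Real_Asymp"
begin


lemma sumIf: "finite I \<Longrightarrow> J \<subseteq> I \<Longrightarrow>
  (\<Sum>i\<in>I. if i \<in> J then f i else c) = sum f J + real (card I - card J) * (c::real)"
proof -
  assume a: "finite I" "J \<subseteq> I"
  have "I \<inter> - J = I - J" by auto
  then show ?thesis using a
    by (simp add: sum.If_cases Int_absorb1 card_Diff_subset finite_subset Int_commute)
qed

lemma Hform:
  fixes a :: "'a \<Rightarrow> real"
  assumes "finite A" "\<forall>i\<in>A. 0 < a i" "T = sum a A" "T > 0"
  shows "shannonH A (\<lambda>i. a i / T) = log 2 T - (\<Sum>i\<in>A. a i * log 2 (a i)) / T"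
proof -
  have "(\<Sum>i\<in>A. a i / T * log 2 (a i / T)) = (\<Sum>i\<in>A. a i * log 2 (a i) / T - log 2 T * (a i / T))"
    using assms by (intro sum.cong) (auto simp: log_divide field_simps)
  also have "\<dots> = (\<Sum>i\<in>A. a i * log 2 (a i)) / T - log 2 T * (sum a A / T)"
    by (simp add: sum_subtractf sum_divide_distrib sum_distrib_left)
  also have "\<dots> = (\<Sum>i\<in>A. a i * log 2 (a i)) / T - log 2 T" using assms by simp
  finally show ?thesis unfolding shannonH_def by simp
qed

lemma single_col:
  assumes am: "agreement_matrix n B" and h: "shannonH_plus {..<n} (pX n B) = 0"
  shows "\<exists>x0<n. \<forall>x<n. x \<noteq> x0 \<longrightarrow> (\<forall>y<n. B y x = 0)"
proof -
  have nn: "\<forall>y<n. \<forall>x<n. 0 \<le> B y x" and ex: "\<exists>y<n. \<exists>x<n. B y x \<noteq> 0"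
    using am by (auto simp: agreement_matrix_def)
  define S where "S = Ssum n B"
  obtain y1 x1 where yx1: "y1 < n" "x1 < n" "B y1 x1 \<noteq> 0" using ex by auto
  have colnn: "0 \<le> (\<Sum>y<n. B y x)" if "x < n" for x using nn that by (auto intro!: sum_nonneg)
  have rownn: "0 \<le> (\<Sum>x<n. B y x)" if "y < n" for y using nn that by (auto intro!: sum_nonneg)
  have "0 < B y1 x1" using yx1 nn by (metis order.not_eq_order_implies_strict)
  then have r1: "0 < (\<Sum>x<n. B y1 x)"
    using yx1 nn by (intro sum_pos2[of _ x1]) auto
  have Spos: "S > 0" unfolding S_def Ssum_def
    using yx1 rownn r1 by (intro sum_pos2[of _ y1 "\<lambda>y. \<Sum>x<n. B y x"]) auto
  have pnn: "0 \<le> pX n B x" if "x < n" for x using colnn[OF that] Spos by (simp add: pX_def S_def)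
  have sw: "(\<Sum>x<n. \<Sum>y<n. B y x) = S" unfolding S_def Ssum_def by (rule sum.swap)
  have psum: "(\<Sum>x<n. pX n B x) = 1"
  proof -
    have "(\<Sum>x<n. pX n B x) = (\<Sum>x<n. \<Sum>y<n. B y x) / S"
      unfolding pX_def S_def by (rule sum_divide_distrib[symmetric])
    then show ?thesis using sw Spos by simp
  qed
  have ple: "pX n B x \<le> 1" if "x < n" for x
  proof -
    have "pX n B x \<le> (\<Sum>x<n. pX n B x)" using that pnn by (intro member_le_sum) auto
    then show ?thesis using psum by simp
  qed
  define P where "P = {x\<in>{..<n}. 0 < pX n B x}"
  have finP: "finite P" by (simp add: P_def)
  have s0: "(\<Sum>x\<in>P. - (pX n B x * log 2 (pX n B x))) = 0"
    using h by (simp add: shannonH_plus_def P_def sum_negf)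
  have nn0: "\<And>x. x \<in> P \<Longrightarrow> 0 \<le> - (pX n B x * log 2 (pX n B x))"
  proof -
    fix x assume "x \<in> P"
    then have "0 < pX n B x" "pX n B x \<le> 1" using ple by (auto simp: P_def)
    then have "log 2 (pX n B x) \<le> 0" by simp
    then show "0 \<le> - (pX n B x * log 2 (pX n B x))"
      using \<open>0 < pX n B x\<close> by (simp add: mult_nonneg_nonpos)
  qed
  have z: "\<forall>x\<in>P. - (pX n B x * log 2 (pX n B x)) = 0"
  proof -
    have "(\<Sum>x\<in>P. - (pX n B x * log 2 (pX n B x))) = 0 \<longleftrightarrow> (\<forall>x\<in>P. - (pX n B x * log 2 (pX n B x)) = 0)"
      by (rule sum_nonneg_eq_0_iff[OF finP]) (rule nn0)
    with s0 show ?thesis by blast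
  qed
  have P1: "\<forall>x\<in>P. pX n B x = 1"
  proof
    fix x assume x: "x \<in> P"
    then have p: "0 < pX n B x" by (simp add: P_def)
    from z x have "pX n B x = 0 \<or> log 2 (pX n B x) = 0" by simp
    then have "log 2 (pX n B x) = 0" using p by auto
    moreover have "pX n B x = 2 powr (log 2 (pX n B x))" using p by simp
    ultimately show "pX n B x = 1" by simp
  qed
  have "(\<Sum>x<n. pX n B x) = (\<Sum>x\<in>P. pX n B x)"
    using pnn by (intro sum.mono_neutral_right) (auto simp: P_def order.not_eq_order_implies_strict)
  also have "\<dots> = real (card P)" using P1 by simp
  finally have "card P = 1" using psum by simp
  then obtain x0 where P: "P = {x0}" by (auto simp: card_Suc_eq)
  have "x0 < n" using P by (auto simp: P_def)
  moreover have "\<forall>x<n. x \<noteq> x0 \<longrightarrow> (\<forall>y<n. B y x = 0)"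
  proof (intro allI impI)
    fix x y assume x: "x < n" "x \<noteq> x0" and y: "y < n"
    then have "x \<notin> P" using P by auto
    then have "\<not> 0 < pX n B x" using x by (auto simp: P_def)
    then have "pX n B x = 0" using pnn[OF x(1)] by linarith
    then have "(\<Sum>y<n. B y x) = 0" using Spos by (simp add: pX_def S_def)
    then show "B y x = 0" using nn x y sum_nonneg_eq_0_iff[of "{..<n}" "\<lambda>y. B y x"] by auto
  qed
  ultimately show ?thesis by blast
qed

lemma A1: "((\<lambda>e::real. -1 / log 2 e) \<longlongrightarrow> 0) (at_right 0)" by real_asymp
lemma A2: "((\<lambda>e::real. - (e * log 2 e)) \<longlongrightarrow> 0) (at_right 0)" by real_asymp
lemma ev01: "eventually (\<lambda>e. e \<in> {0<..<1}) (at_right (0::real))"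
  by (rule eventually_at_right_real) simp

lemma G: fixes f :: "real \<Rightarrow> real"
  assumes d: "(f has_real_derivative D) (at 0)" and f0: "f 0 = 0"
  shows "((\<lambda>e. f e / (- (e * log 2 e))) \<longlongrightarrow> 0) (at_right 0)"
proof -
  have "((\<lambda>h. (f (0+h) - f 0)/h) \<longlongrightarrow> D) (at 0)" using d by (simp add: DERIV_def)
  then have "((\<lambda>h. f h/h) \<longlongrightarrow> D) (at 0)" using f0 by simp
  then have 1: "((\<lambda>h. f h/h) \<longlongrightarrow> D) (at_right 0)" by (rule tendsto_within_subset) auto
  have "((\<lambda>e. (f e/e) * (-1 / log 2 e)) \<longlongrightarrow> D * 0) (at_right 0)"
    by (rule tendsto_mult[OF 1 A1])
  then have 2: "((\<lambda>e. (f e/e) * (-1 / log 2 e)) \<longlongrightarrow> 0) (at_right 0)" by simp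
  have "eventually (\<lambda>e. (f e/e) * (-1 / log 2 e) = f e / (- (e * log 2 e))) (at_right (0::real))"
    using ev01 by eventually_elim auto
  then show ?thesis using 2 by (rule Lim_transform_eventually[rotated]) 
qed

lemma alg1: fixes f k q d :: real shows "q \<noteq> 0 \<Longrightarrow> f / q + k / d = (f + k * q / d) / q"
  by (cases "d = 0") (simp_all add: field_simps)
lemma alg2: fixes x1 x2 x3 a b c q d :: real shows
  "x1 + a*q/d + (x2 + b*q/d) - (x3 + c*q/d) = (x1+x2-x3) + (a+b-c)*q/d"
  by (cases "d = 0") (simp_all add: field_simps)
lemma G2: fixes f :: "real \<Rightarrow> real"
  assumes d: "(f has_real_derivative D) (at 0)" and f0: "f 0 = 0" and S: "S > 0"
  shows "((\<lambda>e. (f e + k * (- (e * log 2 e)) / (S + c * e)) / (- (e * log 2 e))) \<longlongrightarrow> k / S) (at_right 0)"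
proof -
  have "((\<lambda>e. f e / (- (e * log 2 e)) + k / (S + c * e)) \<longlongrightarrow> 0 + k / (S + c * 0)) (at_right 0)"
    using S by (intro tendsto_intros G[OF d f0]) auto
  then have 1: "((\<lambda>e. f e / (- (e * log 2 e)) + k / (S + c * e)) \<longlongrightarrow> k / S) (at_right 0)" by simp
  have "eventually (\<lambda>e. f e / (- (e * log 2 e)) + k / (S + c * e) = (f e + k * (- (e * log 2 e)) / (S + c * e)) / (- (e * log 2 e))) (at_right (0::real))"
    using ev01
  proof eventually_elim
    case (elim e)
    then have "log 2 e < 0" by simp
    then have "e * log 2 e < 0" using elim by (intro mult_pos_neg) auto
    then have "- (e * log 2 e) \<noteq> 0" by linarith
    then show ?case by (rule alg1)
  qed
  then show ?thesis using 1 by (rule Lim_transform_eventually[rotated]) 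
qed

lemma limit_part:
  fixes Cx Cy Cxy :: "real \<Rightarrow> real" and S c nn mm :: real
  assumes dx: "(Cx has_real_derivative Dx) (at 0)" and dy: "(Cy has_real_derivative Dy) (at 0)"
    and dxy: "(Cxy has_real_derivative Dxy) (at 0)"
    and x0: "Cx 0 = 0" and yxy: "Cy 0 = Cxy 0" and ycase: "Cy 0 > 0 \<or> (Cy 0 = 0 \<and> mm = 1)"
    and S: "S > 0" and c: "c \<ge> 0" and nn: "nn \<ge> 2" and mm: "mm \<le> nn"
  shows "((\<lambda>e. (((Cx e + (nn-1)*nn*(- (e * log 2 e))/(S + c*e)) + (Cy e + (nn-mm)*nn*(- (e * log 2 e))/(S + c*e))
           - (Cxy e + (nn^2-mm)*(- (e * log 2 e))/(S + c*e)))
           / min (Cx e + (nn-1)*nn*(- (e * log 2 e))/(S + c*e)) (Cy e + (nn-mm)*nn*(- (e * log 2 e))/(S + c*e))))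
         \<longlongrightarrow> (nn - mm) / nn) (at_right 0)"
proof -
  define Q where "Q = (\<lambda>e::real. - (e * log 2 e))"
  define HX where "HX = (\<lambda>e. Cx e + (nn-1)*nn*Q e/(S + c*e))"
  define HY where "HY = (\<lambda>e. Cy e + (nn-mm)*nn*Q e/(S + c*e))"
  define HXY where "HXY = (\<lambda>e. Cxy e + (nn^2-mm)*Q e/(S + c*e))"
  define \<alpha> where "\<alpha> = (nn-1)*nn/S"
  have \<alpha>: "\<alpha> > 0" using S nn by (simp add: \<alpha>_def)
  have Qpos: "eventually (\<lambda>e. Q e > 0) (at_right 0)"
    using ev01 by eventually_elim (auto simp: Q_def mult_pos_neg)
  have hx: "((\<lambda>e. HX e / Q e) \<longlongrightarrow> \<alpha>) (at_right 0)"
    unfolding HX_def Q_def \<alpha>_def by (rule G2[OF dx x0 S])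
  have dn: "((\<lambda>e. Cx e + Cy e - Cxy e) has_real_derivative (Dx + Dy - Dxy)) (at 0)"
    by (intro derivative_intros dx dy dxy)
  have "((\<lambda>e. ((Cx e + Cy e - Cxy e) + ((nn-1)*(nn-mm))*Q e/(S + c*e)) / Q e) \<longlongrightarrow> ((nn-1)*(nn-mm))/S) (at_right 0)"
    unfolding Q_def by (rule G2[OF dn]) (use x0 yxy S in auto)
  moreover have "((Cx e + Cy e - Cxy e) + ((nn-1)*(nn-mm))*Q e/(S + c*e)) = HX e + HY e - HXY e" for e
    unfolding HX_def HY_def HXY_def alg2 by (simp add: algebra_simps power2_eq_square)
  ultimately have hn: "((\<lambda>e. (HX e + HY e - HXY e) / Q e) \<longlongrightarrow> ((nn-1)*(nn-mm))/S) (at_right 0)" by simp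
  have hm: "((\<lambda>e. min (HX e) (HY e) / Q e) \<longlongrightarrow> \<alpha>) (at_right 0)"
  proof (cases "Cy 0 > 0")
    case True
    have cy: "(Cy \<longlongrightarrow> Cy 0) (at_right 0)"
      using DERIV_isCont[OF dy] unfolding isCont_def by (rule tendsto_within_subset) auto
    have "LIM e at_right 0. Cy e / Q e :> at_top"
      by (rule LIM_at_top_divide[OF cy True]) (use Qpos A2 in \<open>auto simp: Q_def\<close>)
    then have e1: "eventually (\<lambda>e. Cy e / Q e > \<alpha> + 1) (at_right 0)"
      by (simp add: filterlim_at_top_dense)
    have e2: "eventually (\<lambda>e. HX e / Q e < \<alpha> + 1) (at_right 0)"
      using hx by (rule order_tendstoD) simp
    have "eventually (\<lambda>e. HX e / Q e = min (HX e) (HY e) / Q e) (at_right 0)"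
      using e1 e2 Qpos ev01
    proof eventually_elim
      case (elim e)
      have "HY e / Q e = Cy e / Q e + (nn-mm)*nn/(S + c*e)"
        using elim by (simp add: HY_def add_divide_distrib)
      moreover have "S + c*e > 0" using S c elim by (simp add: add_pos_nonneg)
      then have "(nn-mm)*nn/(S + c*e) \<ge> 0" using mm nn by simp
      ultimately have "HY e / Q e > HX e / Q e" using elim by linarith
      then have "HY e > HX e" using elim by (simp add: divide_less_cancel)
      then show ?case by simp
    qed
    with hx show ?thesis by (rule Lim_transform_eventually) 
  next
    case False
    then have "Cy 0 = 0" "mm = 1" using ycase by auto
    then have hy: "((\<lambda>e. HY e / Q e) \<longlongrightarrow> \<alpha>) (at_right 0)"
      unfolding HY_def Q_def \<alpha>_def using G2[OF dy _ S, of "(nn-1)*nn" c] by simp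
    have "((\<lambda>e. min (HX e / Q e) (HY e / Q e)) \<longlongrightarrow> min \<alpha> \<alpha>) (at_right 0)"
      by (intro tendsto_min hx hy)
    moreover have "eventually (\<lambda>e. min (HX e / Q e) (HY e / Q e) = min (HX e) (HY e) / Q e) (at_right 0)"
      using Qpos by eventually_elim (simp add: min_divide_distrib_right)
    ultimately show ?thesis by (simp add: Lim_transform_eventually)
  qed
  have "((\<lambda>e. ((HX e + HY e - HXY e) / Q e) / (min (HX e) (HY e) / Q e)) \<longlongrightarrow> (((nn-1)*(nn-mm))/S) / \<alpha>) (at_right 0)"
    by (rule tendsto_divide[OF hn hm]) (use \<alpha> in auto)
  moreover have "(((nn-1)*(nn-mm))/S) / \<alpha> = (nn-mm)/nn" using S nn by (simp add: \<alpha>_def field_simps)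
  moreover have "eventually (\<lambda>e. ((HX e + HY e - HXY e) / Q e) / (min (HX e) (HY e) / Q e) = (HX e + HY e - HXY e) / min (HX e) (HY e)) (at_right 0)"
    using Qpos by eventually_elim simp
  ultimately have "((\<lambda>e. (HX e + HY e - HXY e) / min (HX e) (HY e)) \<longlongrightarrow> (nn-mm)/nn) (at_right 0)"
    by (simp add: Lim_transform_eventually)
  then show ?thesis by (simp add: HX_def HY_def HXY_def Q_def)
qed


lemma alg4: fixes L A k e h D :: real shows
  "L - (A + k*(e*h))/D = (L - A/D) + k*(-(e*h))/D"
  by (cases "D = 0") (simp_all add: field_simps)

lemma alg3: fixes L A k n e g h D :: real shows
  "L - (A + k*(n*e*g + n*(e*h)))/D = (L - (A + k*n*e*g)/D) + k*n*(-(e*h))/D"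
  by (cases "D = 0") (simp_all add: field_simps)

theorem theorem2:
  fixes n m :: nat and B :: "nat \<Rightarrow> nat \<Rightarrow> real"
  assumes "n \<ge> 2"
    and "agreement_matrix n B"
    and "shannonH_plus {..<n} (pX n B) = 0"
    and "card (non_null_rows n B) = m"
  shows "((\<lambda>\<epsilon>. IA n (zero_freed B \<epsilon>)) \<longlongrightarrow> (real n - real m) / real n) (at_right 0)"
proof -
  note am = assms(2)
  obtain x0 where x0: "x0 < n" "\<forall>x<n. x \<noteq> x0 \<longrightarrow> (\<forall>y<n. B y x = 0)"
    using single_col[OF assms(2,3)] by blast
  have nonneg: "\<forall>y<n. \<forall>x<n. 0 \<le> B y x" and ex: "\<exists>y<n. \<exists>x<n. B y x \<noteq> 0"
    using am by (auto simp: agreement_matrix_def)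
  define R where "R = non_null_rows n B"
  have R_eq: "R = {y. y < n \<and> B y x0 \<noteq> 0}"
    unfolding R_def non_null_rows_def using x0 by blast
  have Rsub: "R \<subseteq> {..<n}" and finR: "finite R" using R_eq by auto
  have cardR: "card R = m" using assms(4) R_def by simp
  have mn: "m \<le> n" using card_mono[OF _ Rsub] cardR by simp
  have bpos: "\<forall>y\<in>R. 0 < B y x0" using R_eq nonneg x0 by (auto simp: order.not_eq_order_implies_strict)
  have Rne: "R \<noteq> {}" using ex x0 R_eq by blast
  have m1: "m \<ge> 1" using Rne finR cardR by (metis card_0_eq less_one not_le)
  define S where "S = (\<Sum>y\<in>R. B y x0)"
  have Spos: "S > 0" unfolding S_def using Rne finR bpos by (intro sum_pos) auto
  define nn where "nn = real n"
  define mm where "mm = real m"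
  have nn2: "nn \<ge> 2" using assms(1) by (simp add: nn_def)
  have mmnn: "mm \<le> nn" "mm \<ge> 1" using mn m1 by (simp_all add: nn_def mm_def)
  have nm: "real (n - m) = nn - mm" using mn by (simp add: nn_def mm_def of_nat_diff)
  have n1: "real (n - 1) = nn - 1" using assms(1) by (simp add: nn_def of_nat_diff)
  have cardn: "card {..<n} = n" by simp
  define c where "c = nn^2 - mm"
  have "2*nn \<le> nn*nn" using nn2 by (intro mult_right_mono) auto
  then have c0: "c \<ge> 0" using mmnn nn2 unfolding c_def power2_eq_square by linarith
  have Mform: "zero_freed B e y x = (if x = x0 \<and> y \<in> R then B y x0 else e)"
    if "y < n" "x < n" for e y x
    using that x0 R_eq unfolding zero_freed_def by auto
  define Cx where "Cx = (\<lambda>e. log 2 (S + c*e) - ((S+(nn-mm)*e)*log 2 (S+(nn-mm)*e) + (nn-1)*nn*e*log 2 nn)/(S + c*e))"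
  define Cy where "Cy = (\<lambda>e. log 2 (S + c*e) - ((\<Sum>y\<in>R. (B y x0 + (nn-1)*e) * log 2 (B y x0 + (nn-1)*e)) + (nn-mm)*nn*e*log 2 nn)/(S + c*e))"
  define Cxy where "Cxy = (\<lambda>e. log 2 (S + c*e) - (\<Sum>y\<in>R. B y x0 * log 2 (B y x0))/(S + c*e))"
  have IAe: "IA n (zero_freed B e) = (((Cx e + (nn-1)*nn*(- (e * log 2 e))/(S + c*e)) + (Cy e + (nn-mm)*nn*(- (e * log 2 e))/(S + c*e))
           - (Cxy e + (nn^2-mm)*(- (e * log 2 e))/(S + c*e)))
           / min (Cx e + (nn-1)*nn*(- (e * log 2 e))/(S + c*e)) (Cy e + (nn-mm)*nn*(- (e * log 2 e))/(S + c*e)))"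
    if e: "e > 0" for e
  proof -
    define M where "M = zero_freed B e"
    have col: "(\<Sum>y<n. M y x) = (if x = x0 then S + (nn-mm)*e else nn*e)" if "x < n" for x
    proof (cases "x = x0")
      case True
      have "(\<Sum>y<n. M y x) = (\<Sum>y<n. if y \<in> R then B y x0 else e)"
        using that True by (intro sum.cong) (auto simp: M_def Mform)
      also have "\<dots> = S + (nn-mm)*e" using Rsub by (simp add: sumIf cardR nm S_def)
      finally show ?thesis using True by simp
    next
      case False
      have "(\<Sum>y<n. M y x) = (\<Sum>y<n. e)"
        using that False by (intro sum.cong) (auto simp: M_def Mform)
      then show ?thesis using False by (simp add: nn_def)
    qed
    have row: "(\<Sum>x<n. M y x) = (if y \<in> R then B y x0 + (nn-1)*e else nn*e)" if "y < n" for y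
    proof (cases "y \<in> R")
      case True
      have "(\<Sum>x<n. M y x) = (\<Sum>x<n. if x \<in> {x0} then B y x0 else e)"
        using that True by (intro sum.cong) (auto simp: M_def Mform)
      also have "\<dots> = B y x0 + real (n-1)*e" using x0 by (subst sumIf) auto
      also have "\<dots> = B y x0 + (nn-1)*e" by (simp only: n1)
      finally show ?thesis using True by simp
    next
      case False
      have "(\<Sum>x<n. M y x) = (\<Sum>x<n. e)"
        using that False by (intro sum.cong) (auto simp: M_def Mform)
      then show ?thesis using False by (simp add: nn_def)
    qed
    have Mpos: "0 < M y x" if "y < n" "x < n" for y x
      using that bpos e by (auto simp: M_def Mform)
    have Ss: "Ssum n M = S + c*e"
    proof -
      have "Ssum n M = (\<Sum>y<n. if y \<in> R then B y x0 + (nn-1)*e else nn*e)"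
        unfolding Ssum_def by (intro sum.cong) (auto simp: row)
      also have "\<dots> = S + mm*(nn-1)*e + (nn-mm)*(nn*e)"
        using Rsub finR by (simp add: sumIf cardR nm S_def sum.distrib mm_def)
      also have "\<dots> = S + c*e" by (simp add: c_def algebra_simps power2_eq_square)
      finally show ?thesis .
    qed
    have SSpos: "S + c*e > 0" using Spos c0 e by (simp add: add_pos_nonneg)
    have lnn: "(nn*e) * log 2 (nn*e) = nn*e*log 2 nn + nn*(e * log 2 e)"
      using e nn2 by (simp add: log_mult algebra_simps)
    have HX: "shannonH {..<n} (pX n M) = Cx e + (nn-1)*nn*(- (e * log 2 e))/(S + c*e)"
    proof -
      have pXe: "pX n M = (\<lambda>x. (\<Sum>y<n. M y x) / Ssum n M)" by (simp add: pX_def fun_eq_iff)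
      have sw: "Ssum n M = (\<Sum>x<n. \<Sum>y<n. M y x)" unfolding Ssum_def by (rule sum.swap)
      have "shannonH {..<n} (pX n M) = log 2 (Ssum n M) - (\<Sum>x<n. (\<Sum>y<n. M y x) * log 2 (\<Sum>y<n. M y x)) / Ssum n M"
        unfolding pXe
      proof (rule Hform)
        show "\<forall>i\<in>{..<n}. 0 < (\<Sum>y<n. M y i)"
          using Mpos x0 by (auto intro!: sum_pos)
      qed (use sw Ss SSpos in auto)
      also have "(\<Sum>x<n. (\<Sum>y<n. M y x) * log 2 (\<Sum>y<n. M y x)) = (\<Sum>x<n. if x \<in> {x0} then (S + (nn-mm)*e) * log 2 (S + (nn-mm)*e) else (nn*e) * log 2 (nn*e))"
        by (intro sum.cong) (auto simp: col)
      also have "\<dots> = (S + (nn-mm)*e) * log 2 (S + (nn-mm)*e) + real (n-1) * ((nn*e) * log 2 (nn*e))"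
        using x0 by (subst sumIf) auto
      also have "\<dots> = (S + (nn-mm)*e) * log 2 (S + (nn-mm)*e) + (nn-1) * ((nn*e) * log 2 (nn*e))"
        by (simp only: n1)
      finally have "shannonH {..<n} (pX n M) = log 2 (S+c*e) - ((S+(nn-mm)*e)*log 2 (S+(nn-mm)*e) + (nn-1)*(nn*e*log 2 nn + nn*(e*log 2 e)))/(S+c*e)"
        unfolding Ss lnn .
      then show ?thesis unfolding Cx_def by (simp only: alg3)
    qed
    have HY: "shannonH {..<n} (pY n M) = Cy e + (nn-mm)*nn*(- (e * log 2 e))/(S + c*e)"
    proof -
      have pYe: "pY n M = (\<lambda>y. (\<Sum>x<n. M y x) / Ssum n M)" by (simp add: pY_def fun_eq_iff)
      have "shannonH {..<n} (pY n M) = log 2 (Ssum n M) - (\<Sum>y<n. (\<Sum>x<n. M y x) * log 2 (\<Sum>x<n. M y x)) / Ssum n M"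
        unfolding pYe
      proof (rule Hform)
        show "\<forall>i\<in>{..<n}. 0 < (\<Sum>x<n. M i x)"
          using Mpos x0 by (auto intro!: sum_pos)
      qed (use Ss SSpos in \<open>auto simp: Ssum_def\<close>)
      also have "(\<Sum>y<n. (\<Sum>x<n. M y x) * log 2 (\<Sum>x<n. M y x)) = (\<Sum>y<n. if y \<in> R then (B y x0 + (nn-1)*e) * log 2 (B y x0 + (nn-1)*e) else (nn*e) * log 2 (nn*e))"
        by (intro sum.cong) (auto simp: row)
      also have "\<dots> = (\<Sum>y\<in>R. (B y x0 + (nn-1)*e) * log 2 (B y x0 + (nn-1)*e)) + real (n-m) * ((nn*e) * log 2 (nn*e))"
        using Rsub by (subst sumIf) (auto simp: cardR)
      also have "\<dots> = (\<Sum>y\<in>R. (B y x0 + (nn-1)*e) * log 2 (B y x0 + (nn-1)*e)) + (nn-mm) * ((nn*e) * log 2 (nn*e))"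
        by (simp only: nm)
      finally have "shannonH {..<n} (pY n M) = log 2 (S+c*e) - ((\<Sum>y\<in>R. (B y x0 + (nn-1)*e) * log 2 (B y x0 + (nn-1)*e)) + (nn-mm)*(nn*e*log 2 nn + nn*(e*log 2 e)))/(S+c*e)"
        unfolding Ss lnn .
      then show ?thesis unfolding Cy_def by (simp only: alg3)
    qed
    have HXY: "shannonH ({..<n} \<times> {..<n}) (pXY n M) = Cxy e + (nn^2-mm)*(- (e * log 2 e))/(S + c*e)"
    proof -
      have pXYe: "pXY n M = (\<lambda>p. M (fst p) (snd p) / Ssum n M)" by (simp add: pXY_def fun_eq_iff)
      have sp: "Ssum n M = (\<Sum>p\<in>{..<n} \<times> {..<n}. M (fst p) (snd p))"
        unfolding Ssum_def sum.cartesian_product by (simp add: case_prod_beta)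
      have "shannonH ({..<n} \<times> {..<n}) (pXY n M) = log 2 (Ssum n M) - (\<Sum>p\<in>{..<n} \<times> {..<n}. M (fst p) (snd p) * log 2 (M (fst p) (snd p))) / Ssum n M"
        unfolding pXYe
      proof (rule Hform)
        show "\<forall>i\<in>{..<n} \<times> {..<n}. 0 < M (fst i) (snd i)"
          using Mpos by auto
      qed (use sp Ss SSpos in auto)
      also have "(\<Sum>p\<in>{..<n} \<times> {..<n}. M (fst p) (snd p) * log 2 (M (fst p) (snd p))) = (\<Sum>y<n. \<Sum>x<n. M y x * log 2 (M y x))"
        unfolding sum.cartesian_product by (simp add: case_prod_beta)
      also have "\<dots> = (\<Sum>y<n. if y \<in> R then B y x0 * log 2 (B y x0) + (nn-1)*(e * log 2 e) else nn*(e * log 2 e))"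
      proof (intro sum.cong refl)
        fix y assume y: "y \<in> {..<n}"
        show "(\<Sum>x<n. M y x * log 2 (M y x)) = (if y \<in> R then B y x0 * log 2 (B y x0) + (nn-1)*(e * log 2 e) else nn*(e * log 2 e))"
        proof (cases "y \<in> R")
          case True
          have "(\<Sum>x<n. M y x * log 2 (M y x)) = (\<Sum>x<n. if x \<in> {x0} then B y x0 * log 2 (B y x0) else e * log 2 e)"
            using y True by (intro sum.cong) (auto simp: M_def Mform)
          also have "\<dots> = B y x0 * log 2 (B y x0) + real (n-1)*(e * log 2 e)" using x0 by (subst sumIf) auto
          also have "\<dots> = B y x0 * log 2 (B y x0) + (nn-1)*(e * log 2 e)" by (simp only: n1)
          finally show ?thesis using True by simp
        next
          case False
          have "(\<Sum>x<n. M y x * log 2 (M y x)) = (\<Sum>x<n. e * log 2 e)"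
            using y False by (intro sum.cong) (auto simp: M_def Mform)
          then show ?thesis using False by (simp add: nn_def)
        qed
      qed
      also have "\<dots> = (\<Sum>y\<in>R. B y x0 * log 2 (B y x0) + (nn-1)*(e * log 2 e)) + real (n-m) * (nn*(e * log 2 e))"
        using Rsub by (subst sumIf) (auto simp: cardR)
      also have "\<dots> = (\<Sum>y\<in>R. B y x0 * log 2 (B y x0)) + mm*((nn-1)*(e * log 2 e)) + (nn-mm) * (nn*(e * log 2 e))"
        by (simp only: sum.distrib sum_constant cardR nm mm_def[symmetric])
      also have "\<dots> = (\<Sum>y\<in>R. B y x0 * log 2 (B y x0)) + (nn^2-mm)*(e * log 2 e)"
        by (simp add: algebra_simps power2_eq_square)
      finally have "shannonH ({..<n} \<times> {..<n}) (pXY n M) = log 2 (S+c*e) - ((\<Sum>y\<in>R. B y x0 * log 2 (B y x0)) + (nn^2-mm)*(e * log 2 e))/(S+c*e)"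
        unfolding Ss .
      then show ?thesis unfolding Cxy_def by (simp only: alg4)
    qed
    show ?thesis unfolding IA_def M_def[symmetric] HX HY HXY ..
  qed
  have "\<exists>D. (Cx has_real_derivative D) (at 0)" unfolding Cx_def using Spos nn2
    by (auto intro!: exI derivative_eq_intros)
  then obtain Dx where dx: "(Cx has_real_derivative Dx) (at 0)" by blast
  have "\<exists>D. (Cy has_real_derivative D) (at 0)" unfolding Cy_def using Spos nn2 bpos finR
    by (auto intro!: exI derivative_eq_intros)
  then obtain Dy where dy: "(Cy has_real_derivative Dy) (at 0)" by blast
  have "\<exists>D. (Cxy has_real_derivative D) (at 0)" unfolding Cxy_def using Spos
    by (auto intro!: exI derivative_eq_intros)
  then obtain Dxy where dxy: "(Cxy has_real_derivative Dxy) (at 0)" by blast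
  have cx0: "Cx 0 = 0" unfolding Cx_def using Spos by simp
  have yxy: "Cy 0 = Cxy 0" unfolding Cy_def Cxy_def by simp
  have ycase: "Cy 0 > 0 \<or> (Cy 0 = 0 \<and> mm = 1)"
  proof (cases "m = 1")
    case True
    then obtain r where r: "R = {r}" using cardR by (auto simp: card_Suc_eq)
    then have "S = B r x0" by (simp add: S_def)
    then have "Cy 0 = 0" unfolding Cy_def using r Spos by simp
    then show ?thesis using True by (simp add: mm_def)
  next
    case False
    then have m2: "m \<ge> 2" using m1 by simp
    have "(\<Sum>y\<in>R. B y x0 * log 2 (B y x0)) < (\<Sum>y\<in>R. B y x0 * log 2 S)"
    proof (rule sum_strict_mono[OF finR Rne])
      fix y assume y: "y \<in> R"
      have "card (R - {y}) \<ge> 1" using m2 y finR cardR by (simp add: card_Diff_singleton)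
      then have ne: "R - {y} \<noteq> {}" by (metis card.empty not_one_le_zero)
      have "0 < (\<Sum>z\<in>R - {y}. B z x0)" using ne finR bpos by (intro sum_pos) auto
      moreover have "S = B y x0 + (\<Sum>z\<in>R - {y}. B z x0)"
        unfolding S_def using y finR by (simp add: sum.remove)
      ultimately have "B y x0 < S" by linarith
      moreover have by0: "0 < B y x0" using bpos y by blast
      ultimately have "log 2 (B y x0) < log 2 S" using Spos by simp
      then show "B y x0 * log 2 (B y x0) < B y x0 * log 2 S" using by0 by simp
    qed
    also have "\<dots> = S * log 2 S" by (simp add: S_def sum_distrib_right)
    finally have "(\<Sum>y\<in>R. B y x0 * log 2 (B y x0)) / S < log 2 S" using Spos by (simp add: divide_less_eq mult.commute)
    then have "Cy 0 > 0" unfolding Cy_def by simp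
    then show ?thesis by simp
  qed
  have lim: "((\<lambda>e. (((Cx e + (nn-1)*nn*(- (e * log 2 e))/(S + c*e)) + (Cy e + (nn-mm)*nn*(- (e * log 2 e))/(S + c*e))
           - (Cxy e + (nn^2-mm)*(- (e * log 2 e))/(S + c*e)))
           / min (Cx e + (nn-1)*nn*(- (e * log 2 e))/(S + c*e)) (Cy e + (nn-mm)*nn*(- (e * log 2 e))/(S + c*e))))
         \<longlongrightarrow> (nn - mm) / nn) (at_right 0)"
    by (rule limit_part[OF dx dy dxy cx0 yxy ycase Spos c0 nn2 mmnn(1)])
  have ev: "eventually (\<lambda>e. (((Cx e + (nn-1)*nn*(- (e * log 2 e))/(S + c*e)) + (Cy e + (nn-mm)*nn*(- (e * log 2 e))/(S + c*e))
           - (Cxy e + (nn^2-mm)*(- (e * log 2 e))/(S + c*e)))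
           / min (Cx e + (nn-1)*nn*(- (e * log 2 e))/(S + c*e)) (Cy e + (nn-mm)*nn*(- (e * log 2 e))/(S + c*e)))
        = IA n (zero_freed B e)) (at_right 0)"
    using eventually_at_right_less[of "0::real"] by eventually_elim (simp add: IAe)
  have "((\<lambda>e. IA n (zero_freed B e)) \<longlongrightarrow> (nn - mm) / nn) (at_right 0)"
    by (rule Lim_transform_eventually[OF lim ev])
  then show ?thesis by (simp add: nn_def mm_def)
qed
end
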